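(* Let $g:[a,b]\to\mathbb R$ be left-continuous and increasing, with $g^C$ being $p$-$H$-Hölder on $[a,b]$ (i.e. $|g^C(x)-g^C(y)|\le H|x-y|^p$ for all $x,y$, with $H>0$, $p\in(0,1]$). Let $f:[a,b]\to\mathbb R$ be $g$-Lipschitz continuous with Lipschitz constant $H$. Then $$\Big|f(a)(g^C(b)-g^C(a))-\int_a^b f(s)\,\mathrm dg^C(s)\Big|\le H^2(b-a)^p(g(b)-g(a)),$$ $$\Big|\tfrac{f(a)+f(b)}{2}(g^C(b)-g^C(a))-\int_a^b f(s)\,\mathrm dg^C(s)\Big|\le H^2\Big(\tfrac{b-a}{2}\Big)^p(g(b)-g(a)),$$ where the integrals are Kurzweil–Stieltjes integrals.
   Context: $\Delta^+g(t)=g(t^+)-g(t)$; the jump part of $g$ is $g^B(t)=\sum_{s\in[a,t)}\Delta^+g(s)$ and its continuous part is $g^C=g-g^B$. $f$ is $g$-Lipschitz continuous with constant $H$ if $|f(t)-f(s)|\le H|g(t)-g(s)|$ for all $t,s\in[a,b]$. *)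

theory Defs
  imports "HOL-Analysis.Analysis"
begin

definition right_jump :: "(real \<Rightarrow> real) \<Rightarrow> real \<Rightarrow> real" where
  "right_jump g t = Lim (at_right t) g - g t"

definition jump_part :: "(real \<Rightarrow> real) \<Rightarrow> real \<Rightarrow> real \<Rightarrow> real" where
  "jump_part g a t = (\<Sum>\<^sub>\<infinity> s\<in>{a..<t}. right_jump g s)"

definition cont_part :: "(real \<Rightarrow> real) \<Rightarrow> real \<Rightarrow> real \<Rightarrow> real" where
  "cont_part g a t = g t - jump_part g a t"

definition has_ks_integral :: "(real \<Rightarrow> real) \<Rightarrow> (real \<Rightarrow> real) \<Rightarrow> real \<Rightarrow> real \<Rightarrow> real \<Rightarrow> bool" where
  "has_ks_integral f g I a b \<longleftrightarrow>
     (\<forall>e>0. \<exists>\<gamma>. gauge \<gamma> \<and>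
        (\<forall>D. D tagged_division_of {a..b} \<and> \<gamma> fine D \<longrightarrow>
           \<bar>(\<Sum>(t,K)\<in>D. f t * (g (Sup K) - g (Inf K))) - I\<bar> < e))"

definition ks_integrable :: "(real \<Rightarrow> real) \<Rightarrow> (real \<Rightarrow> real) \<Rightarrow> real \<Rightarrow> real \<Rightarrow> bool" where
  "ks_integrable f g a b \<longleftrightarrow> (\<exists>I. has_ks_integral f g I a b)"

definition ks_integral :: "(real \<Rightarrow> real) \<Rightarrow> (real \<Rightarrow> real) \<Rightarrow> real \<Rightarrow> real \<Rightarrow> real" where
  "ks_integral f g a b = (THE I. has_ks_integral f g I a b)"

end

theory Submission
  imports Defs
begin

lemma tdiv_int:
  fixes a b :: real
  assumes "D tagged_division_of {a..b}" "(t,K) \<in> D"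
  shows "K = {Inf K..Sup K} \<and> a \<le> Inf K \<and> Inf K \<le> t \<and> t \<le> Sup K \<and> Sup K \<le> b"
proof -
  obtain c d where K: "K = cbox c d" using tagged_division_ofD(4)[OF assms] by blast
  have tK: "t \<in> K" using tagged_division_ofD(2)[OF assms] .
  have sub: "K \<subseteq> {a..b}" using tagged_division_ofD(3)[OF assms] .
  from K tK have cd: "c \<le> d" "K = {c..d}" by auto
  then have "Inf K = c" "Sup K = d" by auto
  then show ?thesis using cd sub tK by auto
qed

definition ov :: "(real \<Rightarrow> real) \<Rightarrow> real \<Rightarrow> real \<Rightarrow> real \<Rightarrow> real \<Rightarrow> real" where
  "ov G c d c' d' = (if max c c' \<le> min d d' then G (min d d') - G (max c c') else 0)"

lemma ov_sym: "ov G c d c' d' = ov G c' d' c d"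
  unfolding ov_def by (simp add: max.commute min.commute)

lemma ov_sum:
  fixes a b c d :: real and G :: "real \<Rightarrow> real"
  assumes "D tagged_division_of {a..b}" "a \<le> c" "c \<le> d" "d \<le> b"
  shows "(\<Sum>(t,K)\<in>D. ov G c d (Inf K) (Sup K)) = G d - G c"
proof -
  let ?h = "\<lambda>x. G (max c (min d x))"
  have ab: "a \<le> b" using assms by linarith
  have "(\<Sum>(t,K)\<in>D. ?h (Sup K) - ?h (Inf K)) = ?h b - ?h a"
    by (rule additive_tagged_division_1[OF ab assms(1)])
  also have "?h b = G d" using assms by (simp add: max_def min_def)
  also have "?h a = G c" using assms by (simp add: min_absorb2 max_absorb1)
  finally have eq: "(\<Sum>(t,K)\<in>D. ?h (Sup K) - ?h (Inf K)) = G d - G c" .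
  have "(\<Sum>(t,K)\<in>D. ov G c d (Inf K) (Sup K)) = (\<Sum>(t,K)\<in>D. ?h (Sup K) - ?h (Inf K))"
  proof (rule sum.cong[OF refl], clarify)
    fix t K assume "(t,K) \<in> D"
    then have "Inf K \<le> Sup K" using tdiv_int[OF assms(1)] by fastforce
    then show "ov G c d (Inf K) (Sup K) = ?h (Sup K) - ?h (Inf K)"
      using assms unfolding ov_def by (auto simp: max_def min_def)
  qed
  then show ?thesis using eq by simp
qed

lemma ov_nonneg:
  fixes G :: "real \<Rightarrow> real"
  assumes "mono_on {a..b} G" "a \<le> c" "c \<le> d" "d \<le> b" "a \<le> c'" "c' \<le> d'" "d' \<le> b"
  shows "0 \<le> ov G c d c' d'"
  using assms unfolding ov_def
  by (auto intro!: mono_onD[OF assms(1)] simp: max_def min_def)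

lemma LU:
  fixes a b :: real and u G :: "real \<Rightarrow> real"
  assumes D: "D tagged_division_of {a..b}" and D': "D' tagged_division_of {a..b}"
    and u: "mono_on {a..b} u" and G: "mono_on {a..b} G"
  shows "(\<Sum>(t,K)\<in>D. u (Inf K) * (G (Sup K) - G (Inf K)))
       \<le> (\<Sum>(t,K)\<in>D'. u (Sup K) * (G (Sup K) - G (Inf K)))"
proof -
  have fD: "finite D" "finite D'" using D D' by auto
  have "(\<Sum>(t,K)\<in>D. u (Inf K) * (G (Sup K) - G (Inf K)))
     = (\<Sum>(t,K)\<in>D. \<Sum>(t',K')\<in>D'. u (Inf K) * ov G (Inf K) (Sup K) (Inf K') (Sup K'))"
  proof (rule sum.cong[OF refl], clarify)
    fix t K assume "(t,K) \<in> D"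
    then have i: "a \<le> Inf K" "Inf K \<le> Sup K" "Sup K \<le> b" using tdiv_int[OF D] by fastforce+
    show "u (Inf K) * (G (Sup K) - G (Inf K)) = (\<Sum>(t',K')\<in>D'. u (Inf K) * ov G (Inf K) (Sup K) (Inf K') (Sup K'))"
      using ov_sum[OF D' i, of G] by (simp add: sum_distrib_left[symmetric] case_prod_unfold)
  qed
  also have "\<dots> \<le> (\<Sum>(t,K)\<in>D. \<Sum>(t',K')\<in>D'. u (Sup K') * ov G (Inf K) (Sup K) (Inf K') (Sup K'))"
  proof (rule sum_mono, clarify, rule sum_mono, clarify)
    fix t K t' K' assume "(t,K) \<in> D" "(t',K') \<in> D'"
    then have i: "a \<le> Inf K" "Inf K \<le> Sup K" "Sup K \<le> b" "a \<le> Inf K'" "Inf K' \<le> Sup K'" "Sup K' \<le> b"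
      using tdiv_int[OF D] tdiv_int[OF D'] by fastforce+
    have nn: "0 \<le> ov G (Inf K) (Sup K) (Inf K') (Sup K')" using ov_nonneg[OF G i] .
    show "u (Inf K) * ov G (Inf K) (Sup K) (Inf K') (Sup K') \<le> u (Sup K') * ov G (Inf K) (Sup K) (Inf K') (Sup K')"
    proof (cases "max (Inf K) (Inf K') \<le> min (Sup K) (Sup K')")
      case True
      then have "u (Inf K) \<le> u (Sup K')" using i by (intro mono_onD[OF u]) auto
      then show ?thesis using nn by (rule mult_right_mono)
    next
      case False
      then have "ov G (Inf K) (Sup K) (Inf K') (Sup K') = 0" unfolding ov_def by (rule if_not_P)
      then show ?thesis by simp
    qed
  qed
  also have "\<dots> = (\<Sum>(t',K')\<in>D'. \<Sum>(t,K)\<in>D. u (Sup K') * ov G (Inf K) (Sup K) (Inf K') (Sup K'))"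
    unfolding case_prod_unfold by (rule sum.swap)
  also have "\<dots> = (\<Sum>(t,K)\<in>D'. u (Sup K) * (G (Sup K) - G (Inf K)))"
  proof (rule sum.cong[OF refl], clarify)
    fix t' K' assume "(t',K') \<in> D'"
    then have i: "a \<le> Inf K'" "Inf K' \<le> Sup K'" "Sup K' \<le> b" using tdiv_int[OF D'] by fastforce+
    show "(\<Sum>(t,K)\<in>D. u (Sup K') * ov G (Inf K) (Sup K) (Inf K') (Sup K')) = u (Sup K') * (G (Sup K') - G (Inf K'))"
      using ov_sum[OF D i, of G] by (simp add: sum_distrib_left[symmetric] case_prod_unfold ov_sym[of G _ _ "Inf K'"])
  qed
  finally show ?thesis .
qed

lemma ks_exists_mono:
  fixes a b :: real and u G :: "real \<Rightarrow> real"
  assumes ab: "a \<le> b" and u: "mono_on {a..b} u" and G: "mono_on {a..b} G"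
    and uc: "\<forall>e>0. \<exists>\<delta>>0. \<forall>x\<in>{a..b}. \<forall>y\<in>{a..b}. \<bar>x - y\<bar> < \<delta> \<longrightarrow> \<bar>G x - G y\<bar> < e"
  shows "\<exists>I. has_ks_integral u G I a b"
proof -
  define L where "L D = (\<Sum>(t,K)\<in>D. u (Inf K) * (G (Sup K) - G (Inf K)))" for D :: "(real \<times> real set) set"
  define U where "U D = (\<Sum>(t,K)\<in>D. u (Sup K) * (G (Sup K) - G (Inf K)))" for D :: "(real \<times> real set) set"
  define S where "S D = (\<Sum>(t,K)\<in>D. u t * (G (Sup K) - G (Inf K)))" for D :: "(real \<times> real set) set"
  define T where "T = {D. D tagged_division_of {a..b}}"
  define I where "I = Sup (L ` T)"
  have D0: "{(a,{a..b})} \<in> T" unfolding T_def using ab by (intro CollectI tagged_division_of_self_real) auto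
  have LUD: "L D \<le> U D'" if "D \<in> T" "D' \<in> T" for D D'
    using LU[OF _ _ u G, of D D'] that unfolding T_def L_def U_def by auto
  have bdd: "bdd_above (L ` T)" using LUD D0 by (intro bdd_aboveI[of _ "U {(a,{a..b})}"]) auto
  have LI: "L D \<le> I" if "D \<in> T" for D unfolding I_def using bdd that by (intro cSup_upper) auto
  have IU: "I \<le> U D" if "D \<in> T" for D unfolding I_def using D0 that LUD by (intro cSup_least) auto
  have dG: "0 \<le> G (Sup K) - G (Inf K)" and iK: "a \<le> Inf K" "Inf K \<le> t" "t \<le> Sup K" "Sup K \<le> b"
    if "D \<in> T" "(t,K) \<in> D" for D t K
    using tdiv_int[of D a b t K] that unfolding T_def by (auto intro!: mono_onD[OF G])
  have SLU: "L D \<le> S D \<and> S D \<le> U D" if "D \<in> T" for D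
  proof
    show "L D \<le> S D" unfolding L_def S_def
    proof (rule sum_mono, clarify)
      fix t K assume "(t,K) \<in> D"
      note h = dG[OF that this] iK[OF that this]
      then have "u (Inf K) \<le> u t" by (intro mono_onD[OF u]) auto
      then show "u (Inf K) * (G (Sup K) - G (Inf K)) \<le> u t * (G (Sup K) - G (Inf K))"
        using h(1) by (rule mult_right_mono)
    qed
    show "S D \<le> U D" unfolding U_def S_def
    proof (rule sum_mono, clarify)
      fix t K assume "(t,K) \<in> D"
      note h = dG[OF that this] iK[OF that this]
      then have "u t \<le> u (Sup K)" by (intro mono_onD[OF u]) auto
      then show "u t * (G (Sup K) - G (Inf K)) \<le> u (Sup K) * (G (Sup K) - G (Inf K))"
        using h(1) by (rule mult_right_mono)
    qed
  qed
  have uab: "u a \<le> u b" using ab by (intro mono_onD[OF u]) auto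
  have "has_ks_integral u G I a b"
    unfolding has_ks_integral_def
  proof (intro allI impI)
    fix e :: real assume e: "e > 0"
    define e' where "e' = e / (u b - u a + 1)"
    have e': "e' > 0" unfolding e'_def using e uab by simp
    obtain \<delta> where d: "\<delta> > 0" "\<forall>x\<in>{a..b}. \<forall>y\<in>{a..b}. \<bar>x - y\<bar> < \<delta> \<longrightarrow> \<bar>G x - G y\<bar> < e'"
      using uc e' by blast
    show "\<exists>\<gamma>. gauge \<gamma> \<and> (\<forall>D. D tagged_division_of {a..b} \<and> \<gamma> fine D \<longrightarrow>
           \<bar>(\<Sum>(t,K)\<in>D. u t * (G (Sup K) - G (Inf K))) - I\<bar> < e)"
    proof (intro exI conjI allI impI)
      show "gauge (\<lambda>x. ball x (\<delta>/2))" using d by (intro gauge_ball) auto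
      fix D assume "D tagged_division_of {a..b} \<and> (\<lambda>x. ball x (\<delta>/2)) fine D"
      then have DT: "D \<in> T" and fine: "(\<lambda>x. ball x (\<delta>/2)) fine D" unfolding T_def by auto
      have "U D - L D = (\<Sum>(t,K)\<in>D. (u (Sup K) - u (Inf K)) * (G (Sup K) - G (Inf K)))"
        unfolding U_def L_def by (simp add: sum_subtractf[symmetric] case_prod_unfold left_diff_distrib)
      also have "\<dots> \<le> (\<Sum>(t,K)\<in>D. (u (Sup K) - u (Inf K)) * e')"
      proof (rule sum_mono, clarify)
        fix t K assume tK: "(t,K) \<in> D"
        note h = dG[OF DT tK] iK[OF DT tK]
        have "K \<subseteq> ball t (\<delta>/2)" using fine tK unfolding fine_def by auto
        moreover have "Inf K \<in> K" "Sup K \<in> K" using tdiv_int[of D a b t K] DT tK unfolding T_def by auto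
        ultimately have "dist t (Inf K) < \<delta>/2" "dist t (Sup K) < \<delta>/2" by auto
        then have "\<bar>t - Inf K\<bar> < \<delta>/2" "\<bar>t - Sup K\<bar> < \<delta>/2" by (simp_all only: dist_real_def)
        then have "\<bar>Sup K - Inf K\<bar> < \<delta>" by (simp only: abs_less_iff) linarith
        moreover have "Inf K \<in> {a..b}" "Sup K \<in> {a..b}" using h by auto
        ultimately have "\<bar>G (Sup K) - G (Inf K)\<bar> < e'" using d(2) by blast
        moreover have "u (Inf K) \<le> u (Sup K)" using h by (intro mono_onD[OF u]) auto
        ultimately show "(u (Sup K) - u (Inf K)) * (G (Sup K) - G (Inf K)) \<le> (u (Sup K) - u (Inf K)) * e'"
          by (intro mult_left_mono) auto
      qed
      also have "\<dots> = e' * (u b - u a)"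
        using additive_tagged_division_1[OF ab, of D u] DT unfolding T_def
        by (simp add: sum_distrib_left[symmetric] case_prod_unfold mult.commute)
      also have "\<dots> < e" unfolding e'_def using e uab by (simp add: field_simps)
      finally have "U D - L D < e" .
      then show "\<bar>(\<Sum>(t,K)\<in>D. u t * (G (Sup K) - G (Inf K))) - I\<bar> < e"
        using SLU[OF DT] LI[OF DT] IU[OF DT] unfolding S_def by linarith
    qed
  qed
  then show ?thesis by blast
qed

lemma half_diff: "\<bar>S1 - I1\<bar> < e \<Longrightarrow> \<bar>S2 - I2\<bar> < e \<Longrightarrow> \<bar>(S1 - S2)/2 - (I1 - I2)/2\<bar> < (e::real)"
  by (auto simp: abs_less_iff field_simps)

lemma two_close: "\<bar>S - I\<bar> < e \<Longrightarrow> \<bar>S - J\<bar> < e \<Longrightarrow> \<bar>I - J\<bar> < 2 * (e::real)"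
  unfolding abs_less_iff by (elim conjE, intro conjI; linarith)

lemma ks_diff_half:
  assumes "has_ks_integral u1 G I1 a b" "has_ks_integral u2 G I2 a b"
  shows "has_ks_integral (\<lambda>x. (u1 x - u2 x) / 2) G ((I1 - I2) / 2) a b"
  unfolding has_ks_integral_def
proof (intro allI impI)
  fix e :: real assume e: "e > 0"
  obtain g1 where g1: "gauge g1" "\<forall>D. D tagged_division_of {a..b} \<and> g1 fine D \<longrightarrow>
           \<bar>(\<Sum>(t,K)\<in>D. u1 t * (G (Sup K) - G (Inf K))) - I1\<bar> < e"
    using assms(1)[unfolded has_ks_integral_def, rule_format, OF e] by blast
  obtain g2 where g2: "gauge g2" "\<forall>D. D tagged_division_of {a..b} \<and> g2 fine D \<longrightarrow>
           \<bar>(\<Sum>(t,K)\<in>D. u2 t * (G (Sup K) - G (Inf K))) - I2\<bar> < e"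
    using assms(2)[unfolded has_ks_integral_def, rule_format, OF e] by blast
  show "\<exists>\<gamma>. gauge \<gamma> \<and> (\<forall>D. D tagged_division_of {a..b} \<and> \<gamma> fine D \<longrightarrow>
           \<bar>(\<Sum>(t,K)\<in>D. (u1 t - u2 t) / 2 * (G (Sup K) - G (Inf K))) - (I1 - I2) / 2\<bar> < e)"
  proof (intro exI conjI allI impI)
    show "gauge (\<lambda>x. g1 x \<inter> g2 x)" using g1 g2 by auto
    fix D assume D: "D tagged_division_of {a..b} \<and> (\<lambda>x. g1 x \<inter> g2 x) fine D"
    then have Dt: "D tagged_division_of {a..b}" and f1: "g1 fine D" and f2: "g2 fine D"
      by (simp_all add: fine_Int)
    have h1: "\<bar>(\<Sum>(t,K)\<in>D. u1 t * (G (Sup K) - G (Inf K))) - I1\<bar> < e"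
      using g1(2) Dt f1 by blast
    have h2: "\<bar>(\<Sum>(t,K)\<in>D. u2 t * (G (Sup K) - G (Inf K))) - I2\<bar> < e"
      using g2(2) Dt f2 by blast
    have eqS: "(\<Sum>(t,K)\<in>D. (u1 t - u2 t) / 2 * (G (Sup K) - G (Inf K)))
        = ((\<Sum>(t,K)\<in>D. u1 t * (G (Sup K) - G (Inf K))) - (\<Sum>(t,K)\<in>D. u2 t * (G (Sup K) - G (Inf K)))) / 2"
    proof -
      have "(\<Sum>(t,K)\<in>D. (u1 t - u2 t) / 2 * (G (Sup K) - G (Inf K)))
         = (\<Sum>(t,K)\<in>D. (u1 t * (G (Sup K) - G (Inf K)) - u2 t * (G (Sup K) - G (Inf K))) / 2)"
        by (rule sum.cong) (auto simp: algebra_simps)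
      also have "\<dots> = (\<Sum>(t,K)\<in>D. u1 t * (G (Sup K) - G (Inf K)) - u2 t * (G (Sup K) - G (Inf K))) / 2"
        unfolding case_prod_unfold by (rule sum_divide_distrib[symmetric])
      also have "\<dots> = ((\<Sum>(t,K)\<in>D. u1 t * (G (Sup K) - G (Inf K))) - (\<Sum>(t,K)\<in>D. u2 t * (G (Sup K) - G (Inf K)))) / 2"
        unfolding case_prod_unfold by (simp only: sum_subtractf)
      finally show ?thesis .
    qed
    show "\<bar>(\<Sum>(t,K)\<in>D. (u1 t - u2 t) / 2 * (G (Sup K) - G (Inf K))) - (I1 - I2) / 2\<bar> < e"
      unfolding eqS by (rule half_diff[OF h1 h2])
  qed
qed

lemma ks_unique:
  fixes a b :: real
  assumes "has_ks_integral f G I a b" "has_ks_integral f G J a b"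
  shows "I = J"
proof (rule ccontr)
  assume ne: "I \<noteq> J"
  define e where "e = \<bar>I - J\<bar> / 2"
  have e: "e > 0" using ne unfolding e_def by simp
  obtain g1 where g1: "gauge g1" "\<forall>D. D tagged_division_of {a..b} \<and> g1 fine D \<longrightarrow>
           \<bar>(\<Sum>(t,K)\<in>D. f t * (G (Sup K) - G (Inf K))) - I\<bar> < e"
    using assms(1)[unfolded has_ks_integral_def, rule_format, OF e] by blast
  obtain g2 where g2: "gauge g2" "\<forall>D. D tagged_division_of {a..b} \<and> g2 fine D \<longrightarrow>
           \<bar>(\<Sum>(t,K)\<in>D. f t * (G (Sup K) - G (Inf K))) - J\<bar> < e"
    using assms(2)[unfolded has_ks_integral_def, rule_format, OF e] by blast
  obtain D where "D tagged_division_of {a..b}" "(\<lambda>x. g1 x \<inter> g2 x) fine D"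
    using fine_division_exists_real[OF gauge_Int[OF g1(1) g2(1)]] by blast
  then have Dt: "D tagged_division_of {a..b}" and f1: "g1 fine D" and f2: "g2 fine D"
    by (simp_all add: fine_Int)
  have "\<bar>(\<Sum>(t,K)\<in>D. f t * (G (Sup K) - G (Inf K))) - I\<bar> < e"
    using g1(2) Dt f1 by blast
  moreover have "\<bar>(\<Sum>(t,K)\<in>D. f t * (G (Sup K) - G (Inf K))) - J\<bar> < e"
    using g2(2) Dt f2 by blast
  ultimately have "\<bar>I - J\<bar> < 2 * e" by (rule two_close)
  then show False unfolding e_def by simp
qed

lemma ks_integral_eq:
  assumes "has_ks_integral f G I a b"
  shows "ks_integral f G a b = I"
  unfolding ks_integral_def
  apply (rule the_equality[where a=I])
   apply (rule assms)
  apply (erule ks_unique[OF _ assms])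
  done

lemma close_eps: "\<bar>S - I\<bar> < e \<Longrightarrow> \<bar>C - S\<bar> \<le> M \<Longrightarrow> \<bar>C - I\<bar> \<le> M + (e::real)"
  unfolding abs_less_iff abs_le_iff by (elim conjE, intro conjI; linarith)

lemma ks_bound:
  fixes a b c M :: real and f G :: "real \<Rightarrow> real"
  assumes ab: "a \<le> b" and I: "has_ks_integral f G I a b" and G: "mono_on {a..b} G"
    and M: "\<forall>t\<in>{a..b}. \<bar>c - f t\<bar> \<le> M"
  shows "\<bar>c * (G b - G a) - I\<bar> \<le> M * (G b - G a)"
proof (rule field_le_epsilon)
  fix e :: real assume e: "e > 0"
  obtain g1 where g1: "gauge g1" "\<forall>D. D tagged_division_of {a..b} \<and> g1 fine D \<longrightarrow>
           \<bar>(\<Sum>(t,K)\<in>D. f t * (G (Sup K) - G (Inf K))) - I\<bar> < e"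
    using I[unfolded has_ks_integral_def, rule_format, OF e] by blast
  obtain D where D: "D tagged_division_of {a..b}" "g1 fine D"
    using fine_division_exists_real[OF g1(1)] by blast
  have h1: "\<bar>(\<Sum>(t,K)\<in>D. f t * (G (Sup K) - G (Inf K))) - I\<bar> < e" using g1 D by blast
  have "c * (G b - G a) = (\<Sum>(t,K)\<in>D. c * (G (Sup K) - G (Inf K)))"
    using additive_tagged_division_1[OF ab D(1), of G]
    by (simp add: sum_distrib_left[symmetric] case_prod_unfold)
  then have "c * (G b - G a) - (\<Sum>(t,K)\<in>D. f t * (G (Sup K) - G (Inf K)))
      = (\<Sum>(t,K)\<in>D. (c - f t) * (G (Sup K) - G (Inf K)))"
    by (simp add: sum_subtractf[symmetric] case_prod_unfold left_diff_distrib)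
  also have "\<bar>\<dots>\<bar> \<le> (\<Sum>(t,K)\<in>D. \<bar>(c - f t) * (G (Sup K) - G (Inf K))\<bar>)"
    unfolding case_prod_unfold by (rule sum_abs)
  also have "\<dots> \<le> (\<Sum>(t,K)\<in>D. M * (G (Sup K) - G (Inf K)))"
  proof (rule sum_mono, clarify)
    fix t K assume tK: "(t,K) \<in> D"
    have h: "a \<le> Inf K" "Inf K \<le> t" "t \<le> Sup K" "Sup K \<le> b" using tdiv_int[OF D(1) tK] by auto
    then have "0 \<le> G (Sup K) - G (Inf K)" by (auto intro!: mono_onD[OF G])
    moreover have "\<bar>c - f t\<bar> \<le> M" using M h by auto
    ultimately show "\<bar>(c - f t) * (G (Sup K) - G (Inf K))\<bar> \<le> M * (G (Sup K) - G (Inf K))"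
      by (simp add: abs_mult mult_right_mono)
  qed
  also have "\<dots> = M * (G b - G a)"
    using additive_tagged_division_1[OF ab D(1), of G]
    by (simp add: sum_distrib_left[symmetric] case_prod_unfold)
  finally show "\<bar>c * (G b - G a) - I\<bar> \<le> M * (G b - G a) + e" using close_eps[OF h1] by blast
qed

lemma right_jump_bounds:
  fixes g :: "real \<Rightarrow> real"
  assumes g: "mono_on {a..b} g" and x: "a \<le> x" "x < b"
  shows "g x \<le> Lim (at_right x) g" and "\<And>y. x < y \<Longrightarrow> y \<le> b \<Longrightarrow> Lim (at_right x) g \<le> g y"
proof -
  define S where "S = g ` ({x<..} \<inter> {a..b})"
  have "(g \<longlongrightarrow> Inf S) (at x within ({x<..} \<inter> {a..b}))"
    unfolding S_def
    by (rule Lim_right_bound[where K="g x"]) (auto intro!: mono_onD[OF g] simp: x)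
  moreover have "at x within ({x<..} \<inter> {a..b}) = at x within {x<..}"
    by (rule at_within_nhd[where S="{x - 1<..<b}"]) (use x in auto)
  ultimately have "(g \<longlongrightarrow> Inf S) (at_right x)" by simp
  then have L: "Lim (at_right x) g = Inf S" by (intro tendsto_Lim) auto
  have ne: "S \<noteq> {}" unfolding S_def using x by auto
  have lb: "\<And>z. z \<in> S \<Longrightarrow> g x \<le> z" unfolding S_def using x by (auto intro!: mono_onD[OF g])
  show "g x \<le> Lim (at_right x) g" unfolding L by (rule cInf_greatest[OF ne lb])
  show "Lim (at_right x) g \<le> g y" if "x < y" "y \<le> b" for y
    unfolding L using lb that x by (intro cInf_lower) (auto simp: S_def bdd_below_def)
qed

lemma jumps_finite:
  fixes g :: "real \<Rightarrow> real"
  assumes g: "mono_on {a..b} g" and F: "finite F" and s: "a \<le> s"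
  shows "\<forall>t. s \<le> t \<longrightarrow> t \<le> b \<longrightarrow> F \<subseteq> {s..<t} \<longrightarrow> sum (right_jump g) F \<le> g t - g s"
  using F
proof (induction F rule: finite_linorder_max_induct)
  case empty
  then show ?case using s by (auto intro!: mono_onD[OF g])
next
  case (insert m A)
  show ?case
  proof (intro allI impI)
    fix t assume t: "s \<le> t" "t \<le> b" "insert m A \<subseteq> {s..<t}"
    then have m: "s \<le> m" "m < t" and A: "A \<subseteq> {s..<m}" using insert(2) by auto
    have mA: "m \<notin> A" using insert(2) by auto
    have IH: "sum (right_jump g) A \<le> g m - g s" using insert(3) m A t by auto
    have "right_jump g m \<le> g t - g m"
      using right_jump_bounds(2)[OF g _ _ m(2) t(2)] m s t unfolding right_jump_def by auto
    then show "sum (right_jump g) (insert m A) \<le> g t - g s"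
      using IH insert(1) mA by simp
  qed
qed

lemma jumps_summable:
  fixes g :: "real \<Rightarrow> real"
  assumes g: "mono_on {a..b} g" and "a \<le> s" "s \<le> t" "t \<le> b"
  shows "right_jump g summable_on {s..<t}" and "infsum (right_jump g) {s..<t} \<le> g t - g s"
proof -
  have fin: "sum (right_jump g) F \<le> g t - g s" if "finite F" "F \<subseteq> {s..<t}" for F
    using jumps_finite[OF g that(1) assms(2)] that assms by auto
  have nn: "0 \<le> right_jump g x" if "x \<in> {s..<t}" for x
    using right_jump_bounds(1)[OF g, of x] that assms unfolding right_jump_def by auto
  show sm: "right_jump g summable_on {s..<t}"
    by (rule nonneg_bdd_above_summable_on[OF nn]) (use fin in \<open>auto intro!: bdd_aboveI\<close>)
  show "infsum (right_jump g) {s..<t} \<le> g t - g s"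
    by (rule infsum_le_finite_sums[OF sm fin])
qed

lemma cont_part_mono:
  fixes g :: "real \<Rightarrow> real"
  assumes g: "mono_on {a..b} g"
  shows "mono_on {a..b} (cont_part g a)"
proof (rule mono_onI)
  fix s t assume st: "s \<in> {a..b}" "t \<in> {a..b}" "s \<le> t"
  have u: "{a..<t} = {a..<s} \<union> {s..<t}" using st by auto
  have "jump_part g a t = jump_part g a s + infsum (right_jump g) {s..<t}"
    unfolding jump_part_def u
    by (rule infsum_Un_disjoint) (use jumps_summable(1)[OF g] st in auto)
  moreover have "infsum (right_jump g) {s..<t} \<le> g t - g s" using jumps_summable(2)[OF g] st by auto
  ultimately show "cont_part g a s \<le> cont_part g a t" unfolding cont_part_def by simp
qed

theorem mainTheorem3:
  fixes f g :: "real \<Rightarrow> real" and a b H p :: real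
  assumes ab: "a < b"
    and g_mono: "mono_on {a..b} g"
    and g_leftcont: "\<forall>t\<in>{a<..b}. (g \<longlongrightarrow> g t) (at_left t)"
    and H_pos: "H > 0" and p_pos: "0 < p" and p_le1: "p \<le> 1"
    and gC_hoelder: "\<forall>x\<in>{a..b}. \<forall>y\<in>{a..b}.
        \<bar>cont_part g a x - cont_part g a y\<bar> \<le> H * \<bar>x - y\<bar> powr p"
    and f_glip: "\<forall>t\<in>{a..b}. \<forall>s\<in>{a..b}. \<bar>f t - f s\<bar> \<le> H * \<bar>g t - g s\<bar>"
  shows "ks_integrable f (cont_part g a) a b
    \<and> \<bar>f a * (cont_part g a b - cont_part g a a) - ks_integral f (cont_part g a) a b\<bar>
        \<le> H^2 * (b - a) powr p * (g b - g a)
    \<and> \<bar>(f a + f b) / 2 * (cont_part g a b - cont_part g a a) - ks_integral f (cont_part g a) a b\<bar>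
        \<le> H^2 * ((b - a) / 2) powr p * (g b - g a)"
proof -
  define G where "G = cont_part g a"
  have ab': "a \<le> b" using ab by simp
  have Gm: "mono_on {a..b} G" unfolding G_def by (rule cont_part_mono[OF g_mono])
  have gmono: "g x \<le> g y" if "x \<in> {a..b}" "y \<in> {a..b}" "x \<le> y" for x y
    using that by (rule mono_onD[OF g_mono])
  have uc: "\<forall>e>0. \<exists>\<delta>>0. \<forall>x\<in>{a..b}. \<forall>y\<in>{a..b}. \<bar>x - y\<bar> < \<delta> \<longrightarrow> \<bar>G x - G y\<bar> < e"
  proof (intro allI impI)
    fix e :: real assume e: "e > 0"
    define \<delta> where "\<delta> = (e / H) powr (1 / p)"
    have eH: "e / H > 0" using e H_pos by simp
    have dpos: "\<delta> > 0" unfolding \<delta>_def using e H_pos by simp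
    have dp: "\<delta> powr p = e / H" unfolding \<delta>_def using eH p_pos e H_pos by (simp add: powr_powr)
    show "\<exists>\<delta>>0. \<forall>x\<in>{a..b}. \<forall>y\<in>{a..b}. \<bar>x - y\<bar> < \<delta> \<longrightarrow> \<bar>G x - G y\<bar> < e"
    proof (intro exI[of _ \<delta>] conjI dpos ballI impI)
      fix x y assume xy: "x \<in> {a..b}" "y \<in> {a..b}" "\<bar>x - y\<bar> < \<delta>"
      have "\<bar>x - y\<bar> powr p < \<delta> powr p" using xy(3) p_pos by (intro powr_less_mono2) auto
      then have "\<bar>x - y\<bar> powr p * H < e" using H_pos dp by (simp add: pos_less_divide_eq)
      then have "H * \<bar>x - y\<bar> powr p < e" by (simp add: mult.commute)
      then show "\<bar>G x - G y\<bar> < e" using gC_hoelder xy unfolding G_def by fastforce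
    qed
  qed
  have u1: "mono_on {a..b} (\<lambda>x. H * g x + f x)"
  proof (rule mono_onI)
    fix x y assume xy: "x \<in> {a..b}" "y \<in> {a..b}" "x \<le> y"
    have "g x \<le> g y" using gmono[OF xy] .
    moreover have "\<bar>f y - f x\<bar> \<le> H * \<bar>g y - g x\<bar>" using f_glip xy by auto
    ultimately show "H * g x + f x \<le> H * g y + f y"
      by (simp add: abs_le_iff algebra_simps)
  qed
  have u2: "mono_on {a..b} (\<lambda>x. H * g x - f x)"
  proof (rule mono_onI)
    fix x y assume xy: "x \<in> {a..b}" "y \<in> {a..b}" "x \<le> y"
    have "g x \<le> g y" using gmono[OF xy] .
    moreover have "\<bar>f y - f x\<bar> \<le> H * \<bar>g y - g x\<bar>" using f_glip xy by auto
    ultimately show "H * g x - f x \<le> H * g y - f y"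
      by (simp add: abs_le_iff algebra_simps)
  qed
  obtain I1 where I1: "has_ks_integral (\<lambda>x. H * g x + f x) G I1 a b"
    using ks_exists_mono[OF ab' u1 Gm uc] by blast
  obtain I2 where I2: "has_ks_integral (\<lambda>x. H * g x - f x) G I2 a b"
    using ks_exists_mono[OF ab' u2 Gm uc] by blast
  have feq: "(\<lambda>x. ((H * g x + f x) - (H * g x - f x)) / 2) = f" by (rule ext) simp
  have If: "has_ks_integral f G ((I1 - I2) / 2) a b"
    using ks_diff_half[OF I1 I2] unfolding feq .
  define I where "I = (I1 - I2) / 2"
  have int: "ks_integral f G a b = I" unfolding I_def by (rule ks_integral_eq[OF If])
  have integrable: "ks_integrable f G a b" unfolding ks_integrable_def using If by blast
  have gab: "g a \<le> g b" using ab' by (intro gmono) auto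
  have "\<bar>G b - G a\<bar> \<le> H * \<bar>b - a\<bar> powr p"
    using gC_hoelder[rule_format, of b a] ab' unfolding G_def by simp
  then have Gab: "G b - G a \<le> H * (b - a) powr p" using ab' by simp
  have Gab0: "0 \<le> G b - G a" using ab' by (auto intro!: mono_onD[OF Gm])
  have b1: "\<bar>f a * (G b - G a) - I\<bar> \<le> (H * (g b - g a)) * (G b - G a)"
  proof (rule ks_bound[OF ab' If[folded I_def] Gm], intro ballI)
    fix t assume t: "t \<in> {a..b}"
    have "\<bar>f a - f t\<bar> \<le> H * \<bar>g a - g t\<bar>" using f_glip t ab' by auto
    also have "\<bar>g a - g t\<bar> = g t - g a" using gmono[of a t] t by auto
    also have "g t - g a \<le> g b - g a" using gmono[of t b] t by auto
    finally show "\<bar>f a - f t\<bar> \<le> H * (g b - g a)" using H_pos by simp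
  qed
  have b2: "\<bar>(f a + f b) / 2 * (G b - G a) - I\<bar> \<le> (H / 2 * (g b - g a)) * (G b - G a)"
  proof (rule ks_bound[OF ab' If[folded I_def] Gm], intro ballI)
    fix t assume t: "t \<in> {a..b}"
    have "\<bar>f a - f t\<bar> \<le> H * \<bar>g a - g t\<bar>" "\<bar>f b - f t\<bar> \<le> H * \<bar>g b - g t\<bar>" using f_glip t ab' by auto
    moreover have "\<bar>g a - g t\<bar> = g t - g a" using gmono[of a t] t by auto
    moreover have "\<bar>g b - g t\<bar> = g b - g t" using gmono[of t b] t by auto
    ultimately have "\<bar>f a - f t\<bar> + \<bar>f b - f t\<bar> \<le> H * (g b - g a)" by (simp add: algebra_simps)
    then have tri: "\<bar>(f a - f t) + (f b - f t)\<bar> \<le> H * (g b - g a)"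
      by (rule order_trans[OF abs_triangle_ineq])
    have q: "(f a + f b) / 2 - f t = ((f a - f t) + (f b - f t)) / 2" by (simp add: field_simps)
    show "\<bar>(f a + f b) / 2 - f t\<bar> \<le> H / 2 * (g b - g a)" unfolding q using tri by simp
  qed
  have M1: "0 \<le> H * (g b - g a)" using H_pos gab by simp
  have c1: "(H * (g b - g a)) * (G b - G a) \<le> H^2 * (b - a) powr p * (g b - g a)"
  proof -
    have "(H * (g b - g a)) * (G b - G a) \<le> (H * (g b - g a)) * (H * (b - a) powr p)"
      by (rule mult_left_mono[OF Gab M1])
    then show ?thesis by (simp add: power2_eq_square algebra_simps)
  qed
  have pw: "(b - a) powr p / 2 \<le> ((b - a) / 2) powr p"
  proof -
    have "(2::real) powr p \<le> 2 powr 1" using p_le1 by (intro powr_mono) auto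
    then have two: "(2::real) powr p \<le> 2" by simp
    have "((b - a) / 2) powr p = (b - a) powr p / 2 powr p" using ab' by (simp add: powr_divide)
    moreover have "(b - a) powr p / 2 \<le> (b - a) powr p / 2 powr p"
      using two by (intro divide_left_mono) auto
    ultimately show ?thesis by simp
  qed
  have c2: "(H / 2 * (g b - g a)) * (G b - G a) \<le> H^2 * ((b - a) / 2) powr p * (g b - g a)"
  proof -
    have M2: "0 \<le> H / 2 * (g b - g a)" using M1 by simp
    have "(H / 2 * (g b - g a)) * (G b - G a) \<le> (H / 2 * (g b - g a)) * (H * (b - a) powr p)"
      by (rule mult_left_mono[OF Gab M2])
    also have "\<dots> = (H * H * (g b - g a)) * ((b - a) powr p / 2)" by (simp add: field_simps)
    also have "\<dots> \<le> (H * H * (g b - g a)) * (((b - a) / 2) powr p)"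
      using M1 H_pos by (intro mult_left_mono[OF pw]) (simp add: mult.assoc)
    finally show ?thesis by (simp add: power2_eq_square algebra_simps)
  qed
  show ?thesis
    using integrable b1 c1 b2 c2 int unfolding G_def by linarith
qed

end
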